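(* Let $X$ be a real Hilbert space, let $\rho>-1$ and let $A\colon X\rightrightarrows X$ be maximally $\rho$-comonotone. Then $\operatorname{ran}(\mathrm{Id}+A^{-1})=X$.
   Context: For $A\colon X\rightrightarrows X$, $A^{-1}$ is defined by $\operatorname{gra}A^{-1}=\{(u,x):(x,u)\in\operatorname{gra}A\}$. For $\rho\in\mathbb R$, $A$ is $\rho$-comonotone if $\langle x-y,u-v\rangle\ge\rho\|u-v\|^2$ for all $(x,u),(y,v)\in\operatorname{gra}A$; maximally $\rho$-comonotone if moreover no $\rho$-comonotone operator has a graph properly containing $\operatorname{gra}A$. *)

theory Defs
  imports "HOL-Analysis.Analysis"
begin

text \<open>A set-valued operator A on X is represented by its graph, a set of pairs (x,u) with u in A x.\<close>

definition inv_op :: "('a \<times> 'a) set \<Rightarrow> ('a \<times> 'a) set" where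
  "inv_op A = {(u, x). (x, u) \<in> A}"

definition comonotone :: "real \<Rightarrow> ('a::real_inner \<times> 'a) set \<Rightarrow> bool" where
  "comonotone \<rho> A \<longleftrightarrow>
     (\<forall>x u y v. (x, u) \<in> A \<longrightarrow> (y, v) \<in> A \<longrightarrow> inner (x - y) (u - v) \<ge> \<rho> * (norm (u - v))\<^sup>2)"

definition max_comonotone :: "real \<Rightarrow> ('a::real_inner \<times> 'a) set \<Rightarrow> bool" where
  "max_comonotone \<rho> A \<longleftrightarrow> comonotone \<rho> A \<and> (\<forall>B. comonotone \<rho> B \<longrightarrow> A \<subseteq> B \<longrightarrow> B = A)"

definition ran_id_plus :: "('a::real_vector \<times> 'a) set \<Rightarrow> 'a set" where
  "ran_id_plus A = {x + u | x u. (x, u) \<in> A}"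

end

theory Submission
  imports Defs "HOL-Real_Asymp.Real_Asymp"
begin

lemma h_expand:
  fixes y v p z :: "'a::real_inner"
  shows "\<rho> * (norm (p - v))\<^sup>2 - inner (z - p - y) (p - v)
    = (1+\<rho>) * (norm p)\<^sup>2 + inner (y - z - (1+2*\<rho>) *\<^sub>R v) p + (\<rho> * (norm v)\<^sup>2 + inner (z - y) v)"
  by (simp add: power2_norm_eq_inner inner_diff_left inner_diff_right inner_add_left inner_commute algebra_simps)

lemma psi_le:
  fixes a p :: "'a::real_inner"
  assumes "s > 0"
  shows "c - (norm a)\<^sup>2 / (4 * s) \<le> s * (norm p)\<^sup>2 + inner a p + c"
proof -
  have "0 \<le> s * (norm (p + (1/(2 * s)) *\<^sub>R a))\<^sup>2" using assms by simp
  also have "\<dots> = s * (norm p)\<^sup>2 + inner a p + (norm a)\<^sup>2 / (4 * s)"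
    using assms by (simp add: power2_norm_eq_inner inner_add_left inner_add_right inner_commute field_simps)
  finally show ?thesis by simp
qed

lemma alg1:
  fixes a0 a1 :: "'a::real_inner"
  assumes "s > 0"
  defines "p \<equiv> - (1/(2 * s)) *\<^sub>R a0"
  shows "(c0 + t*(c1 - c0)) - (norm (a0 + t *\<^sub>R (a1 - a0)))\<^sup>2/(4 * s)
   = (c0 - (norm a0)\<^sup>2/(4 * s)) + t*((s*(norm p)\<^sup>2 + inner a1 p + c1) - (c0 - (norm a0)\<^sup>2/(4 * s)))
     - t^2 * (norm (a1 - a0))\<^sup>2/(4 * s)"
proof -
  have n1: "(norm (a0 + t *\<^sub>R (a1 - a0)))\<^sup>2 = (norm a0)\<^sup>2 + 2*t*(inner a0 a1 - (norm a0)\<^sup>2) + t^2 * (norm (a1 - a0))\<^sup>2"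
    unfolding power2_norm_eq_inner
    by (simp add: inner_add_left inner_add_right inner_diff_left inner_diff_right inner_commute algebra_simps power2_eq_square)
  have n2: "(norm p)\<^sup>2 = (norm a0)\<^sup>2 / (4 * s^2)" unfolding p_def using assms
    by (simp add: power_divide power2_eq_square)
  have n3: "inner a1 p = - inner a0 a1 / (2 * s)" unfolding p_def by (simp add: inner_commute)
  show ?thesis unfolding n1 n2 n3 using assms by (simp add: field_simps power2_eq_square)
qed


definition hh :: "real \<Rightarrow> 'a::real_inner \<Rightarrow> ('a \<times> 'a) \<Rightarrow> 'a \<Rightarrow> real" where
  "hh \<rho> z g p = \<rho> * (norm (p - snd g))\<^sup>2 - inner (z - p - fst g) (p - snd g)"

lemma hh_V:
  fixes V Y z y v :: "'a::real_inner"
  shows "hh \<rho> z (y,v) V = - (inner (y - Y) (v - V) - \<rho> * (norm (v - V))\<^sup>2) + inner (z - V - Y) (v - V)"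
  unfolding hh_def power2_norm_eq_inner
  by (simp add: inner_diff_left inner_diff_right inner_commute algebra_simps)

lemma Q_split:
  fixes Y V y v y' v' :: "'a::real_inner"
  shows "inner (y - y') (v - v') - \<rho> * (norm (v - v'))\<^sup>2
    = (inner (y - Y) (v - V) - \<rho> * (norm (v - V))\<^sup>2) + (inner (y' - Y) (v' - V) - \<rho> * (norm (v' - V))\<^sup>2)
      - inner (y - Y) (v' - V) - inner (y' - Y) (v - V) + 2 * \<rho> * inner (v - V) (v' - V)"
  unfolding power2_norm_eq_inner
  by (simp add: inner_diff_left inner_diff_right inner_commute algebra_simps)

lemma avg_ineq:
  fixes A :: "('a::real_inner \<times> 'a) set"
  assumes com: "comonotone \<rho> A" and fin: "finite S" and SA: "S \<subseteq> A"
    and lpos: "\<forall>g\<in>S. 0 \<le> l g" and lsum: "sum l S = 1"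
  defines "Y \<equiv> (\<Sum>g\<in>S. l g *\<^sub>R fst g)" and "V \<equiv> (\<Sum>g\<in>S. l g *\<^sub>R snd g)"
  shows "(\<Sum>g\<in>S. l g * hh \<rho> z g V) \<le> 0"
proof -
  define \<phi> where "\<phi> g = inner (fst g - Y) (snd g - V) - \<rho> * (norm (snd g - V))\<^sup>2" for g
  define \<Phi> where "\<Phi> = (\<Sum>g\<in>S. l g * \<phi> g)"
  have sdy: "(\<Sum>g\<in>S. l g *\<^sub>R (fst g - Y)) = 0"
    by (simp add: scaleR_right_diff_distrib sum_subtractf Y_def scaleR_sum_left[symmetric] lsum)
  have sdv: "(\<Sum>g\<in>S. l g *\<^sub>R (snd g - V)) = 0"
    by (simp add: scaleR_right_diff_distrib sum_subtractf V_def scaleR_sum_left[symmetric] lsum)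
  have e1: "(\<Sum>g\<in>S. l g * hh \<rho> z g V) = - \<Phi>"
  proof -
    have "(\<Sum>g\<in>S. l g * hh \<rho> z g V) = (\<Sum>g\<in>S. - (l g * \<phi> g) + inner (z - V - Y) (l g *\<^sub>R (snd g - V)))"
      by (rule sum.cong, simp, metis hh_V prod.collapse \<phi>_def inner_scaleR_right distrib_left mult_minus_right)
    also have "\<dots> = - \<Phi> + inner (z - V - Y) (\<Sum>g\<in>S. l g *\<^sub>R (snd g - V))"
      by (simp add: sum.distrib \<Phi>_def inner_sum_right sum_negf sum_subtractf)
    finally show ?thesis using sdv by simp
  qed
  have inner_step: "(\<Sum>g'\<in>S. l g' * (inner (fst g - fst g') (snd g - snd g') - \<rho> * (norm (snd g - snd g'))\<^sup>2)) = \<phi> g + \<Phi>" for g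
  proof -
    have "(\<Sum>g'\<in>S. l g' * (inner (fst g - fst g') (snd g - snd g') - \<rho> * (norm (snd g - snd g'))\<^sup>2))
      = (\<Sum>g'\<in>S. l g' * \<phi> g + l g' * \<phi> g' - inner (fst g - Y) (l g' *\<^sub>R (snd g' - V))
          - inner (l g' *\<^sub>R (fst g' - Y)) (snd g - V) + 2 * \<rho> * inner (snd g - V) (l g' *\<^sub>R (snd g' - V)))"
    proof (rule sum.cong[OF refl])
      fix g' assume "g' \<in> S"
      have "inner (fst g - fst g') (snd g - snd g') - \<rho> * (norm (snd g - snd g'))\<^sup>2 = \<phi> g + \<phi> g' - inner (fst g - Y) (snd g' - V) - inner (fst g' - Y) (snd g - V) + 2*\<rho>*inner (snd g - V) (snd g' - V)"
        unfolding \<phi>_def by (rule Q_split)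
      note q = this
      show "l g' * (inner (fst g - fst g') (snd g - snd g') - \<rho> * (norm (snd g - snd g'))\<^sup>2) = l g' * \<phi> g + l g' * \<phi> g' - inner (fst g - Y) (l g' *\<^sub>R (snd g' - V))
          - inner (l g' *\<^sub>R (fst g' - Y)) (snd g - V) + 2 * \<rho> * inner (snd g - V) (l g' *\<^sub>R (snd g' - V))"
        unfolding q inner_scaleR_left inner_scaleR_right by (simp only: ring_distribs mult.assoc mult.left_commute)
    qed
    also have "\<dots> = \<phi> g * sum l S + \<Phi> - inner (fst g - Y) (\<Sum>g'\<in>S. l g' *\<^sub>R (snd g' - V))
          - inner (\<Sum>g'\<in>S. l g' *\<^sub>R (fst g' - Y)) (snd g - V) + 2 * \<rho> * inner (snd g - V) (\<Sum>g'\<in>S. l g' *\<^sub>R (snd g' - V))"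
      by (simp add: sum.distrib sum_subtractf inner_sum_right inner_sum_left \<Phi>_def sum_distrib_left sum_distrib_right mult.commute)
    finally show ?thesis using sdv sdy lsum by simp
  qed
  have "0 \<le> (\<Sum>g\<in>S. l g * (\<Sum>g'\<in>S. l g' * (inner (fst g - fst g') (snd g - snd g') - \<rho> * (norm (snd g - snd g'))\<^sup>2)))"
  proof (intro sum_nonneg mult_nonneg_nonneg)
    fix g g' assume "g \<in> S" "g' \<in> S"
    then have "(fst g, snd g) \<in> A" "(fst g', snd g') \<in> A" using SA by auto
    then show "0 \<le> inner (fst g - fst g') (snd g - snd g') - \<rho> * (norm (snd g - snd g'))\<^sup>2"
      using com unfolding comonotone_def by fastforce
  qed (use lpos in auto)
  also have "\<dots> = (\<Sum>g\<in>S. l g * \<phi> g + l g * \<Phi>)" by (simp add: inner_step distrib_left)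
  also have "\<dots> = 2 * \<Phi>" by (simp add: sum.distrib \<Phi>_def sum_distrib_right[symmetric] lsum)
  finally show ?thesis using e1 by simp
qed


lemma finite_case:
  fixes A :: "('a::real_inner \<times> 'a) set"
  assumes com: "comonotone \<rho> A" and rho: "\<rho> > -1" and fin: "finite S" and SA: "S \<subseteq> A"
  shows "\<exists>p. \<forall>g\<in>S. hh \<rho> z g p \<le> 0"
proof (cases "S = {}")
  case True then show ?thesis by simp
next
  case False
  define s where "s = 1 + \<rho>"
  have s0: "s > 0" using rho s_def by simp
  define cc where "cc g = \<rho> * (norm (snd g))\<^sup>2 + inner (z - fst g) (snd g)" for g :: "'a\<times>'a"
  define P where "P g = (fst g, snd g, cc g)" for g
  define aa where "aa w = fst w - z - (1+2*\<rho>) *\<^sub>R fst (snd w)" for w :: "'a\<times>'a\<times>real"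
  define Psi where "Psi w = snd (snd w) - (norm (aa w))\<^sup>2/(4 * s)" for w
  define H where "H = convex hull (P ` S)"
  have Hc: "compact H" unfolding H_def using fin by (simp add: finite_imp_compact_convex_hull)
  have Hne: "H \<noteq> {}" unfolding H_def using False by simp
  have cont: "continuous_on H Psi" unfolding Psi_def aa_def using s0 by (intro continuous_intros) auto
  obtain w where wH: "w \<in> H" and wmax: "\<forall>y\<in>H. Psi y \<le> Psi w"
    using continuous_attains_sup[OF Hc Hne cont] by blast
  define p where "p = - (1/(2 * s)) *\<^sub>R aa w"
  have hexp: "hh \<rho> z g p' = s * (norm p')\<^sup>2 + inner (aa (P g)) p' + cc g" for g p'
    unfolding hh_def aa_def P_def cc_def s_def using h_expand[of \<rho> p' "snd g" z "fst g"] by simp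
  have step1: "Psi w \<le> 0"
  proof -
    have injP: "inj_on P S" unfolding inj_on_def P_def by (simp add: prod_eq_iff)
    obtain u where u0: "\<forall>x\<in>P ` S. 0 \<le> u x" and u1: "sum u (P ` S) = 1"
      and uw: "(\<Sum>x\<in>P ` S. u x *\<^sub>R x) = w"
      using wH unfolding H_def convex_hull_finite[OF finite_imageI[OF fin]] by blast
    define l where "l g = u (P g)" for g
    have lpos: "\<forall>g\<in>S. 0 \<le> l g" using u0 l_def by auto
    have lsum: "sum l S = 1" using u1 unfolding l_def sum.reindex[OF injP] by (simp add: comp_def)
    have lw: "(\<Sum>g\<in>S. l g *\<^sub>R P g) = w" using uw unfolding l_def sum.reindex[OF injP] by (simp add: comp_def)
    define Y where "Y = (\<Sum>g\<in>S. l g *\<^sub>R fst g)"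
    define V where "V = (\<Sum>g\<in>S. l g *\<^sub>R snd g)"
    define C where "C = (\<Sum>g\<in>S. l g * cc g)"
    have wY: "fst w = Y" unfolding lw[symmetric] Y_def by (simp add: fst_sum P_def)
    have wV: "fst (snd w) = V" unfolding lw[symmetric] V_def by (simp add: fst_sum snd_sum P_def)
    have wC: "snd (snd w) = C" unfolding lw[symmetric] C_def by (simp add: snd_sum P_def)
    have aw: "(\<Sum>g\<in>S. l g *\<^sub>R aa (P g)) = aa w"
      unfolding aa_def P_def wY wV Y_def V_def
      by (simp add: scaleR_right_diff_distrib sum_subtractf scaleR_sum_left[symmetric] lsum scaleR_sum_right sum.distrib algebra_simps)
    have "Psi w \<le> s * (norm V)\<^sup>2 + inner (aa w) V + C"
      unfolding Psi_def wC using psi_le[OF s0] by simp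
    also have "\<dots> = (\<Sum>g\<in>S. l g * hh \<rho> z g V)"
    proof -
      have "(\<Sum>g\<in>S. l g * hh \<rho> z g V) = (\<Sum>g\<in>S. l g * (s * (norm V)\<^sup>2) + inner (l g *\<^sub>R aa (P g)) V + l g * cc g)"
        by (simp add: hexp algebra_simps)
      also have "\<dots> = s * (norm V)\<^sup>2 + inner (aa w) V + C"
      proof -
        have ia: "(\<Sum>g\<in>S. l g * inner (aa (P g)) V) = inner (aa w) V"
          unfolding aw[symmetric] by (simp add: inner_sum_left)
        show ?thesis by (simp add: sum.distrib sum_distrib_right[symmetric] lsum ia C_def)
      qed
      finally show ?thesis by simp
    qed
    also have "\<dots> \<le> 0" unfolding V_def by (rule avg_ineq[OF com fin SA lpos lsum])
    finally show ?thesis .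
  qed
  have step2: "hh \<rho> z g p \<le> Psi w" if gS: "g \<in> S" for g
  proof (rule ccontr)
    assume neg: "\<not> hh \<rho> z g p \<le> Psi w"
    define D where "D = hh \<rho> z g p - Psi w"
    have Dpos: "D > 0" using neg D_def by simp
    define K where "K = (norm (aa (P g) - aa w))\<^sup>2/(4 * s)"
    have K0: "K \<ge> 0" using s0 K_def by simp
    have key: "t * D - t^2 * K \<le> 0" if t0: "0 \<le> t" and t1: "t \<le> 1" for t
    proof -
      define wt where "wt = (1 - t) *\<^sub>R w + t *\<^sub>R P g"
      have PgH: "P g \<in> H" unfolding H_def using gS by (simp add: hull_inc)
      have "wt \<in> H" unfolding wt_def using wH PgH t0 t1 convex_alt[of H] H_def by (simp add: convex_convex_hull)
      then have le: "Psi wt \<le> Psi w" using wmax by blast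
      have awt: "aa wt = aa w + t *\<^sub>R (aa (P g) - aa w)"
        unfolding wt_def aa_def by (simp add: algebra_simps)
      have cwt: "snd (snd wt) = snd (snd w) + t * (cc g - snd (snd w))"
        unfolding wt_def P_def by (simp add: algebra_simps)
      have "Psi wt = Psi w + t * D - t^2 * K"
        unfolding Psi_def awt cwt D_def K_def hexp p_def
        using alg1[OF s0, of "snd (snd w)" t "cc g" "aa w" "aa (P g)"] unfolding Psi_def by simp
      then show ?thesis using le by simp
    qed
    define t where "t = min 1 (D / (2 * K + 1))"
    have t0: "t > 0" using Dpos K0 t_def by simp
    have t1: "t \<le> 1" using t_def by simp
    have "t \<le> D / (2 * K + 1)" using t_def by simp
    then have "t * K \<le> D / (2 * K + 1) * K" using K0 by (rule mult_right_mono)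
    also have "\<dots> < D" using Dpos K0 by (simp add: field_simps add_pos_nonneg)
    finally have "t * K < D" .
    then have "t * D - t^2 * K > 0" using t0 by (simp add: power2_eq_square algebra_simps)
    with key[OF less_imp_le[OF t0] t1] show False by simp
  qed
  show ?thesis using step1 step2 by (meson order_trans)
qed

lemma parallelo:
  fixes x y :: "'a::real_inner"
  shows "(norm (x - y))\<^sup>2 = 2 * (norm x)\<^sup>2 + 2 * (norm y)\<^sup>2 - 4 * (norm ((1/2) *\<^sub>R (x + y)))\<^sup>2"
  unfolding power2_norm_eq_inner
  by (simp add: inner_add_left inner_add_right inner_diff_left inner_diff_right inner_commute algebra_simps)

lemma fip_hilbert:
  fixes K :: "'i \<Rightarrow> 'a::{real_inner,complete_space} set"
  assumes cl: "\<And>i. i \<in> I \<Longrightarrow> closed (K i)" and cv: "\<And>i. i \<in> I \<Longrightarrow> convex (K i)"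
    and fip: "\<And>F. finite F \<Longrightarrow> F \<subseteq> I \<Longrightarrow> (\<Inter>i\<in>F. K i) \<noteq> {}"
    and i0: "i0 \<in> I" and bd: "\<And>x. x \<in> K i0 \<Longrightarrow> (norm x)\<^sup>2 \<le> M"
  shows "\<exists>x. \<forall>i\<in>I. x \<in> K i"
proof -
  define C where "C F = (\<Inter>i\<in>F. K i)" for F
  define \<beta> where "\<beta> F = Inf ((\<lambda>x. (norm x)\<^sup>2) ` C F)" for F
  define fins where "fins = {F. finite F \<and> F \<subseteq> I}"
  have Cne: "C F \<noteq> {}" if "F \<in> fins" for F using fip that unfolding C_def fins_def by auto
  have Cconv: "convex (C F)" if "F \<in> fins" for F
    using that cv unfolding C_def fins_def by (auto intro!: convex_INT)
  have bb: "bdd_below ((\<lambda>x. (norm x)\<^sup>2) ` C F)" for F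
    by (rule bdd_belowI[of _ 0]) auto
  have \<beta>le: "\<beta> F \<le> (norm x)\<^sup>2" if "x \<in> C F" for F x
    unfolding \<beta>_def using that bb by (auto intro!: cInf_lower)
  have \<beta>approx: "\<exists>x\<in>C F. (norm x)\<^sup>2 < \<beta> F + e" if "F \<in> fins" "e > 0" for F e
  proof -
    have "\<beta> F < \<beta> F + e" using that by simp
    moreover have "(\<lambda>x. (norm x)\<^sup>2) ` C F \<noteq> {}" using Cne[OF that(1)] by simp
    ultimately have "\<exists>v\<in>(\<lambda>x. (norm x)\<^sup>2) ` C F. v < \<beta> F + e"
      unfolding \<beta>_def[of F] using cInf_less_iff[OF _ bb, of F] by blast
    then show ?thesis by blast
  qed
  have \<beta>mono: "\<beta> F \<le> \<beta> G" if "F \<subseteq> G" "G \<in> fins" for F G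
  proof -
    have "\<forall>x\<in>C G. \<beta> F \<le> (norm x)\<^sup>2"
    proof
      fix x assume "x \<in> C G"
      then have "x \<in> C F" using that(1) unfolding C_def by auto
      then show "\<beta> F \<le> (norm x)\<^sup>2" by (rule \<beta>le)
    qed
    then show ?thesis unfolding \<beta>_def[of G] using Cne[OF that(2)]
      by (intro cInf_greatest) auto
  qed
  have \<beta>bd: "\<beta> F \<le> M" if "F \<in> fins" for F
  proof -
    have "insert i0 F \<in> fins" using that i0 fins_def by auto
    then obtain x where "x \<in> C (insert i0 F)" using Cne by blast
    then have "\<beta> (insert i0 F) \<le> (norm x)\<^sup>2" "x \<in> K i0" using \<beta>le C_def by auto
    then show ?thesis using \<beta>mono[of F "insert i0 F"] \<open>insert i0 F \<in> fins\<close> bd by force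
  qed
  have para: "(norm (x - y))\<^sup>2 \<le> 2 * (\<beta> G - \<beta> F) + 2 * e1 + 2 * e2"
    if "F \<subseteq> G" "G \<in> fins" "x \<in> C F" "y \<in> C G" "(norm x)\<^sup>2 < \<beta> F + e1" "(norm y)\<^sup>2 < \<beta> G + e2" for F G x y e1 e2
  proof -
    have F: "F \<in> fins" using that fins_def by (auto intro: finite_subset)
    have "y \<in> C F" using that C_def by auto
    then have "(1/2) *\<^sub>R (x + y) \<in> C F" using Cconv[OF F] \<open>x \<in> C F\<close>
      using convexD[OF Cconv[OF F] \<open>x \<in> C F\<close> \<open>y \<in> C F\<close>, of "1/2" "1/2"] by (simp add: scaleR_right_distrib)
    then have "\<beta> F \<le> (norm ((1/2) *\<^sub>R (x + y)))\<^sup>2" by (rule \<beta>le)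
    then show ?thesis using parallelo[of x y] that(5,6) by argo
  qed
  define \<alpha> where "\<alpha> = Sup (\<beta> ` fins)"
  have fne: "{} \<in> fins" unfolding fins_def by simp
  have ba: "bdd_above (\<beta> ` fins)" using \<beta>bd by (intro bdd_aboveI[of _ M]) auto
  have \<beta>\<alpha>: "\<beta> F \<le> \<alpha>" if "F \<in> fins" for F unfolding \<alpha>_def using ba that by (auto intro: cSup_upper)
  have "\<forall>n::nat. \<exists>F. F \<in> fins \<and> \<alpha> - 1/(real n + 1) < \<beta> F"
  proof
    fix n :: nat
    have "\<alpha> - 1/(real n + 1) < \<alpha>" by simp
    then show "\<exists>F. F \<in> fins \<and> \<alpha> - 1/(real n + 1) < \<beta> F"
      using less_cSup_iff[of "\<beta> ` fins" "\<alpha> - 1/(real n + 1)"] ba fne unfolding \<alpha>_def by blast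
  qed
  then obtain Fs where Fs: "\<And>n. Fs n \<in> fins" "\<And>n. \<alpha> - 1/(real n + 1) < \<beta> (Fs n)" by metis
  define G where "G n = (\<Union>k\<le>n. Fs k)" for n
  have Gf: "G n \<in> fins" for n using Fs(1) unfolding G_def fins_def by auto
  have Gmono: "G n \<subseteq> G m" if "n \<le> m" for n m using that unfolding G_def by (auto intro: order_trans)
  have G\<beta>: "\<alpha> - 1/(real n + 1) < \<beta> (G n)" for n
    using Fs(2)[of n] \<beta>mono[of "Fs n" "G n"] Gf unfolding G_def by fastforce
  have "\<forall>n::nat. \<exists>x\<in>C (G n). (norm x)\<^sup>2 < \<beta> (G n) + 1/(real n + 1)"
    using \<beta>approx Gf by simp
  then obtain p where p: "\<And>n. p n \<in> C (G n)" "\<And>n. (norm (p n))\<^sup>2 < \<beta> (G n) + 1/(real n + 1)" by metis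
  have pd: "(norm (p n - p m))\<^sup>2 \<le> 6/(real n + 1)" if "n \<le> m" for n m
  proof -
    have "(norm (p n - p m))\<^sup>2 \<le> 2 * (\<beta> (G m) - \<beta> (G n)) + 2 * (1/(real n + 1)) + 2 * (1/(real m + 1))"
      using para[OF Gmono[OF that] Gf p(1) p(1) p(2) p(2)] .
    moreover have "1/(real m + 1) \<le> 1/(real n + 1)" using that by (simp add: frac_le)
    moreover have "\<beta> (G m) \<le> \<alpha>" using \<beta>\<alpha> Gf by blast
    ultimately show ?thesis using G\<beta>[of n] by simp
  qed
  have "Cauchy p"
  proof (rule metric_CauchyI)
    fix e :: real assume e: "e > 0"
    obtain N :: nat where N: "6 / e\<^sup>2 < real N" using reals_Archimedean2 by blast
    have e2: "e\<^sup>2 > 0" using e by simp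
    have "6 < real N * e\<^sup>2" using N e2 by (simp add: field_simps)
    moreover have "(real N + 1) * e\<^sup>2 = real N * e\<^sup>2 + e\<^sup>2" by (simp add: algebra_simps)
    ultimately have "6 < (real N + 1) * e\<^sup>2" using e2 by linarith
    then have Nb: "6/(real N + 1) < e\<^sup>2" by (simp add: field_simps)
    show "\<exists>M. \<forall>m\<ge>M. \<forall>n\<ge>M. dist (p m) (p n) < e"
    proof (intro exI allI impI)
      fix m n assume mn: "N \<le> m" "N \<le> n"
      have "(dist (p m) (p n))\<^sup>2 < e\<^sup>2"
      proof (cases "m \<le> n")
        case True
        have "(norm (p m - p n))\<^sup>2 \<le> 6/(real m + 1)" using pd[OF True] .
        also have "\<dots> \<le> 6/(real N + 1)" using mn by (simp add: frac_le)
        finally show ?thesis using Nb by (simp add: dist_norm)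
      next
        case False
        have "(norm (p n - p m))\<^sup>2 \<le> 6/(real n + 1)" using pd False by simp
        also have "\<dots> \<le> 6/(real N + 1)" using mn by (simp add: frac_le)
        finally show ?thesis using Nb by (simp add: dist_norm dist_commute norm_minus_commute)
      qed
      then show "dist (p m) (p n) < e" using e by (meson power2_less_imp_less less_le)
    qed
  qed
  then obtain L where L: "p \<longlonglongrightarrow> L" using Cauchy_convergent_iff convergent_def by blast
  have "L \<in> K i" if iI: "i \<in> I" for i
  proof -
    define H where "H n = insert i (G n)" for n
    have Hf: "H n \<in> fins" for n using Gf iI unfolding H_def fins_def by auto
    have "\<forall>n::nat. \<exists>x\<in>C (H n). (norm x)\<^sup>2 < \<beta> (H n) + 1/(real n + 1)"
      using \<beta>approx Hf by simp
    then obtain q where q: "\<And>n. q n \<in> C (H n)" "\<And>n. (norm (q n))\<^sup>2 < \<beta> (H n) + 1/(real n + 1)" by metis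
    have qd: "norm (p n - q n) \<le> sqrt (6/(real n + 1))" for n
    proof -
      have "(norm (p n - q n))\<^sup>2 \<le> 2 * (\<beta> (H n) - \<beta> (G n)) + 2 * (1/(real n + 1)) + 2 * (1/(real n + 1))"
        using para[of "G n" "H n", OF _ Hf p(1) q(1) p(2) q(2)] H_def by auto
      moreover have "\<beta> (H n) \<le> \<alpha>" using \<beta>\<alpha> Hf by blast
      ultimately have "(norm (p n - q n))\<^sup>2 \<le> 6/(real n + 1)" using G\<beta>[of n] by simp
      then show ?thesis by (rule real_le_rsqrt)
    qed
    have s0: "(\<lambda>n. sqrt (6/(real n + 1))) \<longlonglongrightarrow> 0" by real_asymp
    have "(\<lambda>n. p n - q n) \<longlonglongrightarrow> 0"
      by (rule Lim_null_comparison[OF _ s0]) (simp add: qd)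
    then have "(\<lambda>n. p n - (p n - q n)) \<longlonglongrightarrow> L - 0" by (intro tendsto_diff L)
    then have qL: "q \<longlonglongrightarrow> L" by simp
    have "q n \<in> K i" for n using q(1)[of n] unfolding C_def H_def by auto
    then show ?thesis using closed_sequentially[OF cl[OF iI] _ qL] by blast
  qed
  then show ?thesis by blast
qed


lemma sq_convex_comb:
  fixes p q :: "'a::real_inner"
  assumes "u + v = 1"
  shows "(norm (u *\<^sub>R p + v *\<^sub>R q))\<^sup>2 = u * (norm p)\<^sup>2 + v * (norm q)\<^sup>2 - u * v * (norm (p - q))\<^sup>2"
proof -
  have v: "v = 1 - u" using assms by simp
  show ?thesis unfolding v power2_norm_eq_inner
    by (simp add: inner_add_left inner_add_right inner_diff_left inner_diff_right inner_commute algebra_simps)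
qed

lemma convex_quad_sub:
  fixes a :: "'a::real_inner"
  assumes "s \<ge> 0"
  shows "convex {p. s * (norm p)\<^sup>2 + inner a p + c \<le> 0}"
proof (rule convexI)
  fix p q :: 'a and u v :: real
  assume p: "p \<in> {p. s * (norm p)\<^sup>2 + inner a p + c \<le> 0}" and q: "q \<in> {p. s * (norm p)\<^sup>2 + inner a p + c \<le> 0}"
    and u: "0 \<le> u" and v: "0 \<le> v" and uv: "u + v = 1"
  have "s * (norm (u *\<^sub>R p + v *\<^sub>R q))\<^sup>2 + inner a (u *\<^sub>R p + v *\<^sub>R q) + c
      = u * (s * (norm p)\<^sup>2 + inner a p + c) + v * (s * (norm q)\<^sup>2 + inner a q + c) - s * (u * v * (norm (p - q))\<^sup>2)"
  proof -
    have cc: "c * u + c * v = c" using uv by (metis distrib_left mult.right_neutral)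
    show ?thesis unfolding sq_convex_comb[OF uv] using uv cc by (simp add: inner_add_right algebra_simps)
  qed
  also have "\<dots> \<le> 0"
  proof -
    have "u * (s * (norm p)\<^sup>2 + inner a p + c) \<le> 0" using p u by (simp add: mult_nonneg_nonpos)
    moreover have "v * (s * (norm q)\<^sup>2 + inner a q + c) \<le> 0" using q v by (simp add: mult_nonneg_nonpos)
    moreover have "0 \<le> s * (u * v * (norm (p - q))\<^sup>2)" using assms u v by simp
    ultimately show ?thesis by linarith
  qed
  finally show "u *\<^sub>R p + v *\<^sub>R q \<in> {p. s * (norm p)\<^sup>2 + inner a p + c \<le> 0}" by simp
qed

lemma quad_bound:
  fixes a p :: "'a::real_inner"
  assumes s: "s > 0" and h: "s * (norm p)\<^sup>2 + inner a p + c \<le> 0"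
  shows "(norm p)\<^sup>2 \<le> 1 + ((norm a + \<bar>c\<bar>) / s)\<^sup>2"
proof (cases "norm p \<le> 1")
  case True
  then have "(norm p)\<^sup>2 \<le> 1" by (simp add: power_le_one)
  then show ?thesis by (smt (verit) zero_le_power2)
next
  case False
  have ip: "- inner a p \<le> norm a * norm p" using Cauchy_Schwarz_ineq2[of a p] by (simp add: abs_le_iff)
  have "s * (norm p)\<^sup>2 \<le> norm a * norm p + \<bar>c\<bar>" using h ip by linarith
  also have "\<dots> \<le> (norm a + \<bar>c\<bar>) * norm p"
  proof -
    have "\<bar>c\<bar> * 1 \<le> \<bar>c\<bar> * norm p" by (rule mult_left_mono) (use False in auto)
    then show ?thesis by (simp add: algebra_simps)
  qed
  finally have "s * norm p * norm p \<le> (norm a + \<bar>c\<bar>) * norm p" by (simp add: power2_eq_square mult.assoc)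
  then have "s * norm p \<le> norm a + \<bar>c\<bar>" by (rule mult_right_le_imp_le) (use False in auto)
  then have "norm p \<le> (norm a + \<bar>c\<bar>) / s" using s by (simp add: field_simps)
  then have "(norm p)\<^sup>2 \<le> ((norm a + \<bar>c\<bar>) / s)\<^sup>2" by (simp add: power_mono)
  then show ?thesis by simp
qed

theorem proposition2p9:
  fixes A :: "('a::{real_inner, complete_space} \<times> 'a) set" and \<rho> :: real
  assumes "\<rho> > -1" and "max_comonotone \<rho> A"
  shows "ran_id_plus (inv_op A) = UNIV"
proof -
  have com: "comonotone \<rho> A" and maxi: "\<And>B. comonotone \<rho> B \<Longrightarrow> A \<subseteq> B \<Longrightarrow> B = A"
    using assms(2) unfolding max_comonotone_def by auto
  define s where "s = 1 + \<rho>"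
  have s0: "s > 0" using assms(1) s_def by simp
  have "A \<noteq> {}"
  proof
    assume "A = {}"
    have "comonotone \<rho> {(0::'a, 0::'a)}" unfolding comonotone_def by simp
    then have "{(0::'a, 0::'a)} = A" using maxi \<open>A = {}\<close> by blast
    then show False using \<open>A = {}\<close> by simp
  qed
  then obtain g0 where g0: "g0 \<in> A" by blast
  have "z \<in> ran_id_plus (inv_op A)" for z
  proof -
    define K where "K g = {p. hh \<rho> z g p \<le> 0}" for g
    have hq: "hh \<rho> z g p = s * (norm p)\<^sup>2 + inner (fst g - z - (1+2*\<rho>) *\<^sub>R snd g) p + (\<rho> * (norm (snd g))\<^sup>2 + inner (z - fst g) (snd g))" for g p
      unfolding hh_def s_def using h_expand[of \<rho> p "snd g" z "fst g"] by simp
    have cl: "closed (K g)" for g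
      unfolding K_def hh_def by (intro closed_Collect_le continuous_intros)
    have cv: "convex (K g)" for g
      unfolding K_def hq by (rule convex_quad_sub) (use s0 in simp)
    have fp: "(\<Inter>g\<in>F. K g) \<noteq> {}" if fF: "finite F" and FA: "F \<subseteq> A" for F
    proof -
      obtain p where "\<forall>g\<in>F. hh \<rho> z g p \<le> 0" using finite_case[OF com assms(1) fF FA] by blast
      then have "p \<in> (\<Inter>g\<in>F. K g)" unfolding K_def by simp
      then show ?thesis by blast
    qed
    have bd: "(norm p)\<^sup>2 \<le> 1 + ((norm (fst g0 - z - (1+2*\<rho>) *\<^sub>R snd g0) + \<bar>\<rho> * (norm (snd g0))\<^sup>2 + inner (z - fst g0) (snd g0)\<bar>) / s)\<^sup>2"
      if "p \<in> K g0" for p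
      using that unfolding K_def hq by (intro quad_bound[OF s0]) simp
    obtain p where p: "\<forall>g\<in>A. p \<in> K g" using fip_hilbert[OF cl cv fp g0 bd] by blast
    have "comonotone \<rho> (insert (z - p, p) A)"
      unfolding comonotone_def
    proof (intro allI impI)
      fix x u y v assume xu: "(x, u) \<in> insert (z - p, p) A" and yv: "(y, v) \<in> insert (z - p, p) A"
      have one: "\<rho> * (norm (p - v))\<^sup>2 \<le> inner (z - p - y) (p - v)" if "(y, v) \<in> A" for y v
        using p that unfolding K_def hh_def by force
      show "\<rho> * (norm (u - v))\<^sup>2 \<le> inner (x - y) (u - v)"
      proof (cases "(x, u) = (z - p, p)")
        case True
        show ?thesis
        proof (cases "(y, v) = (z - p, p)")
          case True
          then show ?thesis using \<open>(x, u) = (z - p, p)\<close> by simp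
        next
          case False
          then have "(y, v) \<in> A" using yv by auto
          then show ?thesis using one True by simp
        qed
      next
        case False
        then have xA: "(x, u) \<in> A" using xu by auto
        show ?thesis
        proof (cases "(y, v) = (z - p, p)")
          case True
          have "\<rho> * (norm (p - u))\<^sup>2 \<le> inner (z - p - x) (p - u)" using one xA by blast
          moreover have "inner (x - (z - p)) (u - p) = inner (z - p - x) (p - u)"
            by (metis inner_minus_left inner_minus_right minus_diff_eq minus_minus)
          ultimately show ?thesis using True by (simp add: norm_minus_commute)
        next
          case False
          then have "(y, v) \<in> A" using yv by auto
          then show ?thesis using com xA unfolding comonotone_def by blast
        qed
      qed
    qed
    then have "insert (z - p, p) A = A" using maxi by blast
    then have "(z - p, p) \<in> A" by blast
    then have "(p, z - p) \<in> inv_op A" unfolding inv_op_def by simp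
    then have "p + (z - p) \<in> ran_id_plus (inv_op A)" unfolding ran_id_plus_def by blast
    then show ?thesis by simp
  qed
  then show ?thesis by blast
qed

end
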